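(* Let $\alpha\ge0$, $0\le\beta<1$, and $f=h+\overline{g}\in\mathcal{W}_{\mathcal{H}}^0(\alpha,\beta)$. Then $s_{2,2}(f)(z)=z+a_2z^2+\overline{b_2z^2}$ is a convex harmonic mapping in the disk $|z|<\dfrac{1+\alpha}{4(1-\beta)}$.
   Context: Let $\mathbb{D}=\{z\in\mathbb{C}:|z|<1\}$. $\mathcal{H}^0$ denotes the class of harmonic maps $f=h+\overline{g}$ on $\mathbb{D}$, with $h,g$ analytic in $\mathbb{D}$, $h(z)=z+\sum_{n\ge2}a_nz^n$ and $g(z)=\sum_{n\ge2}b_nz^n$. For $\alpha\ge0$, $0\le\beta<1$, $\mathcal{W}_{\mathcal{H}}^0(\alpha,\beta)$ denotes the class of $f=h+\overline{g}\in\mathcal{H}^0$ such that $\Re\big(h'(z)+\alpha zh''(z)-\beta\big)>|g'(z)+\alpha zg''(z)|$ for all $z\in\mathbb{D}$. A harmonic map is convex in a disk if it is univalent there and maps the disk onto a convex domain. *)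

theory Defs
  imports "HOL-Analysis.Analysis"
begin

text \<open>Class H^0: f = h + conj g, h g analytic in the unit disk,
  h(z) = z + sum_{n>=2} a_n z^n, g(z) = sum_{n>=2} b_n z^n.\<close>
definition H0 :: "(complex \<Rightarrow> complex) \<Rightarrow> (complex \<Rightarrow> complex) \<Rightarrow> bool" where
  "H0 h g \<longleftrightarrow> h holomorphic_on ball 0 1 \<and> g holomorphic_on ball 0 1 \<and>
     h 0 = 0 \<and> deriv h 0 = 1 \<and> g 0 = 0 \<and> deriv g 0 = 0"

definition WH0 :: "real \<Rightarrow> real \<Rightarrow> (complex \<Rightarrow> complex) \<Rightarrow> (complex \<Rightarrow> complex) \<Rightarrow> bool" where
  "WH0 \<alpha> \<beta> h g \<longleftrightarrow> H0 h g \<and>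
     (\<forall>z \<in> ball 0 1.
        Re (deriv h z + of_real \<alpha> * z * (deriv ^^ 2) h z - of_real \<beta>)
          > cmod (deriv g z + of_real \<alpha> * z * (deriv ^^ 2) g z))"

definition taylor_coeff :: "(complex \<Rightarrow> complex) \<Rightarrow> nat \<Rightarrow> complex" where
  "taylor_coeff h n = (deriv ^^ n) h 0 / of_nat (fact n)"

definition convex_map_on :: "(complex \<Rightarrow> complex) \<Rightarrow> complex set \<Rightarrow> bool" where
  "convex_map_on F S \<longleftrightarrow> inj_on F S \<and> convex (F ` S)"

end

theory Submission
  imports Defs "HOL-Complex_Analysis.Complex_Analysis"
begin

lemma E_identity:
  fixes x y v :: complex
  shows "Re ((1 + 2*cnj x - 2*y) * ((v-1) + x*(v^2-1) + cnj (y*(v^2-1))))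
    = (1 + 4*Re x + 4*(cmod x)^2 - 4*(cmod y)^2) * Re (v-1)
      + Re ((x + y + of_real (2*(cmod x)^2 - 2*(cmod y)^2)) * (v-1)^2)"
  by (simp only: cmod_power2) (simp add: power2_eq_square algebra_simps)

lemma c_bound:
  fixes x y :: complex assumes h: "cmod x + cmod y \<le> 1/4"
  shows "cmod (x + y + of_real(2*(cmod x)^2 - 2*(cmod y)^2))
     \<le> (1 + 4*Re x + 4*(cmod x)^2 - 4*(cmod y)^2)/2"
proof -
  define s where "s = cmod x"
  define t where "t = cmod y"
  have s0: "s \<ge> 0" and t0: "t \<ge> 0" using s_def t_def by auto
  have X: "Re x \<ge> -s" using abs_Re_le_cmod[of x] s_def by linarith
  have sq: "(cmod (x + of_real (2 * s ^ 2))) ^ 2 = s ^ 2 + 4 * s ^ 2 * Re x + 4 * (s ^ 2) ^ 2"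
  proof -
    have s2: "s ^ 2 = Re x ^ 2 + Im x ^ 2" by (simp add: s_def cmod_power2)
    have "(cmod (x + of_real (2 * s ^ 2))) ^ 2 = (Re x + 2 * s ^ 2) ^ 2 + (Im x) ^ 2" by (simp add: cmod_power2)
    also have "\<dots> = s ^ 2 + 4 * s ^ 2 * Re x + 4 * (s ^ 2) ^ 2" unfolding s2 by (simp add: power2_eq_square algebra_simps)
    finally show ?thesis .
  qed
  have s14: "s \<le> 1/4" using h t0 s_def t_def by linarith
  have "s * (1 - 2 * s) \<ge> 0" using s0 s14 by (intro mult_nonneg_nonneg) auto
  hence pos: "2 * Re x + 3 * s - 2 * s ^ 2 \<ge> 0" using X by (simp add: power2_eq_square algebra_simps)
  have "s * (1 - 3 * s) \<ge> 0" using s0 s14 by (intro mult_nonneg_nonneg) auto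
  hence P2: "Re x + 2 * s - 3 * s ^ 2 \<ge> 0" using X by (simp add: power2_eq_square algebra_simps)
  have "(2 * Re x + 3 * s - 2 * s ^ 2) ^ 2 - (s ^ 2 + 4 * s ^ 2 * Re x + 4 * (s ^ 2) ^ 2)
      = 4 * (Re x + s) * (Re x + 2 * s - 3 * s ^ 2)"
    by (simp add: power2_eq_square algebra_simps)
  moreover have "(Re x + s) * (Re x + 2 * s - 3 * s ^ 2) \<ge> 0"
    using X P2 by (intro mult_nonneg_nonneg) auto
  ultimately have "(cmod (x + of_real (2 * s ^ 2))) ^ 2 \<le> (2 * Re x + 3 * s - 2 * s ^ 2) ^ 2" using sq by linarith
  hence A: "cmod (x + of_real (2 * s ^ 2)) \<le> 2 * Re x + 3 * s - 2 * s ^ 2"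
    using pos power2_le_imp_le by blast
  have B: "cmod (y - of_real (2 * t ^ 2)) \<le> t + 2 * t ^ 2"
    using norm_triangle_ineq4[of y "of_real (2 * t ^ 2)"] t_def by (simp add: norm_of_real norm_power)
  have "x + y + of_real(2*(cmod x)^2 - 2*(cmod y)^2) = (x + of_real (2 * s ^ 2)) + (y - of_real (2 * t ^ 2))"
    by (simp add: s_def t_def)
  hence "cmod (x + y + of_real(2*(cmod x)^2 - 2*(cmod y)^2)) \<le> cmod (x + of_real (2 * s ^ 2)) + cmod (y - of_real (2 * t ^ 2))"
    by (metis norm_triangle_ineq)
  also have "\<dots> \<le> 2 * Re x + 3 * s - 2 * s ^ 2 + t + 2 * t ^ 2" using A B by linarith
  also have "\<dots> \<le> (1 + 4 * Re x + 4 * s ^ 2 - 4 * t ^ 2) / 2"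
  proof -
    have tu: "t \<le> 1/4 - s" using h s_def t_def by linarith
    have "t * t \<le> (1/4 - s) * (1/4 - s)" using tu t0 by (intro mult_mono) auto
    thus ?thesis using tu by (simp add: power2_eq_square algebra_simps)
  qed
  finally show ?thesis by (simp add: s_def t_def)
qed

lemma E_le:
  fixes x y v :: complex
  assumes h: "cmod x + cmod y \<le> 1/4" and v: "cmod v \<le> 1"
  shows "Re ((1 + 2*cnj x - 2*y) * ((v-1) + x*(v^2-1) + cnj (y*(v^2-1)))) \<le> 0"
proof -
  define R where "R = 1 + 4*Re x + 4*(cmod x)^2 - 4*(cmod y)^2"
  define c where "c = x + y + of_real (2*(cmod x)^2 - 2*(cmod y)^2)"
  define u where "u = v - 1"
  have cb: "cmod c \<le> R/2" using c_bound[OF h] unfolding R_def c_def .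
  have R0: "R \<ge> 0" using cb norm_ge_zero[of c] by linarith
  have "(cmod (u+1))^2 \<le> 1" using v u_def by (simp add: power_le_one)
  hence Reu: "Re u \<le> -((cmod u)^2 / 2)"
    unfolding cmod_power2 by (simp add: power2_eq_square field_simps)
  have "Re (c * u^2) \<le> cmod (c * u^2)" by (rule complex_Re_le_cmod)
  also have "\<dots> = cmod c * (cmod u)^2" by (simp add: norm_mult norm_power)
  also have "\<dots> \<le> R/2 * (cmod u)^2" using cb by (intro mult_right_mono) auto
  finally have C: "Re (c * u^2) \<le> R/2 * (cmod u)^2" .
  have "R * Re u \<le> R * (-((cmod u)^2 / 2))" using R0 Reu by (intro mult_left_mono) auto
  hence "R * Re u + Re (c * u^2) \<le> 0" using C by simp
  thus ?thesis using E_identity[of x y v] unfolding R_def c_def u_def by simp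
qed

lemma support:
  fixes a b z \<zeta> :: complex
  assumes h: "cmod z * (cmod a + cmod b) \<le> 1/4" and zz: "cmod \<zeta> \<le> cmod z" and z0: "z \<noteq> 0"
  shows "Re ((cnj z + 2*cnj a * (cnj z)^2 - 2*b*z^2) *
            ((\<zeta> + a*\<zeta>^2 + cnj(b*\<zeta>^2)) - (z + a*z^2 + cnj(b*z^2)))) \<le> 0"
proof -
  define x where "x = a*z"
  define y where "y = b*z^2/cnj z"
  define v where "v = \<zeta>/z"
  have cz: "cnj z \<noteq> 0" using z0 by simp
  have nx: "cmod x = cmod a * cmod z" by (simp add: x_def norm_mult)
  have ny: "cmod y = cmod b * cmod z" using z0 by (simp add: y_def norm_mult norm_divide norm_power power2_eq_square)
  have hv: "cmod v \<le> 1" using zz z0 by (simp add: v_def norm_divide divide_le_eq_1)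
  have hxy: "cmod x + cmod y \<le> 1/4" using h by (simp add: nx ny algebra_simps)
  have zeta: "\<zeta> = v * z" using z0 by (simp add: v_def)
  have e1: "(\<zeta> + a*\<zeta>^2 + cnj(b*\<zeta>^2)) - (z + a*z^2 + cnj(b*z^2))
      = z * ((v-1) + x*(v^2-1) + cnj (y*(v^2-1)))"
    unfolding zeta x_def y_def using z0 cz
    by (simp add: field_simps power2_eq_square)
  have e2: "cnj z + 2*cnj a * (cnj z)^2 - 2*b*z^2 = cnj z * (1 + 2*cnj x - 2*y)"
    unfolding x_def y_def using z0 cz by (simp add: field_simps power2_eq_square)
  have "(cnj z + 2*cnj a * (cnj z)^2 - 2*b*z^2) *
            ((\<zeta> + a*\<zeta>^2 + cnj(b*\<zeta>^2)) - (z + a*z^2 + cnj(b*z^2)))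
      = (cnj z * z) * ((1 + 2*cnj x - 2*y) * ((v-1) + x*(v^2-1) + cnj (y*(v^2-1))))"
    unfolding e1 e2 by (simp add: algebra_simps)
  also have "cnj z * z = of_real ((cmod z)^2)" by (simp only: complex_norm_square mult.commute)
  finally have eq: "Re ((cnj z + 2*cnj a * (cnj z)^2 - 2*b*z^2) *
            ((\<zeta> + a*\<zeta>^2 + cnj(b*\<zeta>^2)) - (z + a*z^2 + cnj(b*z^2))))
     = (cmod z)^2 * Re ((1 + 2*cnj x - 2*y) * ((v-1) + x*(v^2-1) + cnj (y*(v^2-1))))"
    by simp
  show ?thesis unfolding eq using E_le[OF hxy hv]
    by (simp add: mult_nonneg_nonpos)
qed

lemma acute:
  fixes \<Psi> :: "complex \<Rightarrow> complex" and \<rho> :: real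
  assumes r0: "\<rho> > 0" and cont: "continuous_on (cball 0 \<rho>) \<Psi>"
    and bd: "\<And>z. cmod z = \<rho> \<Longrightarrow> Re (cnj z * \<Psi> z) \<ge> 0"
  shows "\<exists>z\<in>cball 0 \<rho>. \<Psi> z = 0"
proof (rule ccontr)
  assume "\<not> ?thesis"
  hence nz: "\<And>z. z \<in> cball 0 \<rho> \<Longrightarrow> \<Psi> z \<noteq> 0" by blast
  define T where "T z = - of_real \<rho> * \<Psi> z / of_real (cmod (\<Psi> z))" for z
  have cT: "continuous_on (cball 0 \<rho>) T" unfolding T_def
    using nz by (intro continuous_intros cont) auto
  have nT: "z \<in> cball 0 \<rho> \<Longrightarrow> cmod (T z) = \<rho>" for z
    using nz[of z] r0 by (simp add: T_def norm_mult norm_divide)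
  have "T \<in> cball 0 \<rho> \<rightarrow> cball 0 \<rho>" using nT by auto
  then obtain z where z: "z \<in> cball 0 \<rho>" "T z = z" using brouwer_ball[OF r0 cT] by blast
  have mz: "cmod z = \<rho>" using nT[OF z(1)] z(2) by simp
  have "cnj z = - of_real \<rho> * cnj (\<Psi> z) / of_real (cmod (\<Psi> z))"
    by (subst z(2)[symmetric]) (simp add: T_def)
  hence "cnj z * \<Psi> z = - of_real \<rho> * (cnj (\<Psi> z) * \<Psi> z) / of_real (cmod (\<Psi> z))"
    by simp
  also have "cnj (\<Psi> z) * \<Psi> z = of_real ((cmod (\<Psi> z))^2)" by (simp only: complex_norm_square mult.commute)
  finally have "cnj z * \<Psi> z = - of_real (\<rho> * cmod (\<Psi> z))"
    using nz[OF z(1)] by (simp add: power2_eq_square)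
  hence "Re (cnj z * \<Psi> z) < 0" using nz[OF z(1)] r0 by simp
  with bd[OF mz] show False by simp
qed

lemma convex_quad:
  fixes a b :: complex and r :: real
  assumes hr: "r * (cmod a + cmod b) \<le> 1/4"
  defines "F \<equiv> (\<lambda>z. z + a * z^2 + cnj (b * z^2))"
  shows "inj_on F (ball 0 r) \<and> convex (F ` ball 0 r)"
proof
  show "inj_on F (ball 0 r)"
  proof (rule inj_onI)
    fix z1 z2 assume z1: "z1 \<in> ball 0 r" and z2: "z2 \<in> ball 0 r" and eq: "F z1 = F z2"
    define d where "d = z1 - z2"
    have "d = - (a * ((z1 + z2) * d) + cnj (b * ((z1 + z2) * d)))"
      using eq unfolding F_def d_def by (simp add: power2_eq_square algebra_simps complex_eq_iff)
    hence "cmod d \<le> cmod a * (cmod (z1+z2) * cmod d) + cmod b * (cmod (z1+z2) * cmod d)"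
      by (metis norm_minus_cancel norm_triangle_le norm_mult complex_mod_cnj order_refl add_mono)
    hence le: "cmod d \<le> ((cmod a + cmod b) * cmod (z1+z2)) * cmod d" by (simp add: algebra_simps)
    have "cmod (z1+z2) \<le> cmod z1 + cmod z2" by (rule norm_triangle_ineq)
    also have "\<dots> < 2 * r" using z1 z2 by simp
    finally have "(cmod a + cmod b) * cmod (z1+z2) \<le> (cmod a + cmod b) * (2*r)"
      by (intro mult_left_mono) auto
    also have "\<dots> \<le> 1/2" using hr by (simp add: algebra_simps)
    finally have "((cmod a + cmod b) * cmod (z1+z2)) * cmod d \<le> 1/2 * cmod d"
      by (intro mult_right_mono) auto
    with le have "cmod d \<le> 0" by linarith
    thus "z1 = z2" unfolding d_def by simp
  qed
next
  show "convex (F ` ball 0 r)"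
  proof (rule convexI)
    fix p q :: complex and u v :: real
    assume p: "p \<in> F ` ball 0 r" and q: "q \<in> F ` ball 0 r" and u: "0 \<le> u" and v: "0 \<le> v" and uv: "u + v = 1"
    obtain z1 where z1: "z1 \<in> ball 0 r" "p = F z1" using p by blast
    obtain z2 where z2: "z2 \<in> ball 0 r" "q = F z2" using q by blast
    define \<rho> where "\<rho> = max (cmod z1) (cmod z2)"
    define w where "w = u *\<^sub>R p + v *\<^sub>R q"
    have \<rho>r: "\<rho> < r" using z1 z2 by (simp add: \<rho>_def)
    have \<rho>0: "\<rho> \<ge> 0" by (simp add: \<rho>_def le_max_iff_disj)
    show "u *\<^sub>R p + v *\<^sub>R q \<in> F ` ball 0 r"
    proof (cases "\<rho> = 0")
      case True
      hence "z1 = 0" "z2 = 0" unfolding \<rho>_def by (auto simp: max_def split: if_splits)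
      hence "u *\<^sub>R p + v *\<^sub>R q = F 0" using z1 z2 uv
        by (simp add: scaleR_conv_of_real F_def)
      thus ?thesis using z1 \<open>z1 = 0\<close> by blast
    next
      case False
      hence \<rho>p: "\<rho> > 0" using \<rho>0 by simp
      have h\<rho>: "\<rho> * (cmod a + cmod b) \<le> 1/4"
        using hr \<rho>r \<rho>0 by (meson dual_order.trans less_imp_le mult_right_mono add_nonneg_nonneg norm_ge_zero)
      define \<mu> where "\<mu> z = 1 + 2 * cnj (a * z) - 2 * b * z^3 / of_real (\<rho>^2)" for z
      define \<Psi> where "\<Psi> z = (F z - w) * \<mu> z" for z
      have cont: "continuous_on (cball 0 \<rho>) \<Psi>"
        unfolding \<Psi>_def \<mu>_def F_def using \<rho>p by (intro continuous_intros) auto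
      have bd: "Re (cnj z * \<Psi> z) \<ge> 0" if zr: "cmod z = \<rho>" for z
      proof -
        have z0: "z \<noteq> 0" using zr \<rho>p by auto
        have zc: "z * cnj z = of_real (\<rho>^2)" using zr complex_norm_square[of z] by simp
        have "cnj z * \<mu> z = cnj z + 2*cnj a * (cnj z)^2 - 2*b*z^2"
        proof -
          have "cnj z * \<mu> z = cnj z + 2*cnj a * (cnj z)^2 - 2*b*z^2*(z * cnj z) / of_real (\<rho>^2)"
            by (simp add: \<mu>_def power2_eq_square power3_eq_cube algebra_simps)
          also have "\<dots> = cnj z + 2*cnj a * (cnj z)^2 - 2*b*z^2"
            using \<rho>p unfolding zc by simp
          finally show ?thesis .
        qed
        moreover have "cnj z * \<Psi> z = (cnj z * \<mu> z) * (F z - w)"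
          by (simp add: \<Psi>_def algebra_simps)
        ultimately have e: "cnj z * \<Psi> z = (cnj z + 2*cnj a * (cnj z)^2 - 2*b*z^2) * (F z - w)"
          by simp
        have "F z - w = (u + v) *\<^sub>R F z - w" using uv by simp
        also have "\<dots> = u *\<^sub>R (F z - F z1) + v *\<^sub>R (F z - F z2)"
          using z1 z2 unfolding w_def by (simp add: scaleR_add_left scaleR_diff_right)
        finally have FW: "F z - w = u *\<^sub>R (F z - F z1) + v *\<^sub>R (F z - F z2)" .
        have "cnj z * \<Psi> z = - (u *\<^sub>R ((cnj z + 2*cnj a * (cnj z)^2 - 2*b*z^2) * (F z1 - F z)))
            - (v *\<^sub>R ((cnj z + 2*cnj a * (cnj z)^2 - 2*b*z^2) * (F z2 - F z)))"
          unfolding e FW by (simp add: scaleR_conv_of_real algebra_simps)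
        hence "Re (cnj z * \<Psi> z) = - (u * Re ((cnj z + 2*cnj a * (cnj z)^2 - 2*b*z^2) * (F z1 - F z)))
            - (v * Re ((cnj z + 2*cnj a * (cnj z)^2 - 2*b*z^2) * (F z2 - F z)))"
          by simp
        moreover have A1: "Re ((cnj z + 2*cnj a * (cnj z)^2 - 2*b*z^2) * (F z1 - F z)) \<le> 0"
          unfolding F_def by (rule support) (use h\<rho> zr z0 in \<open>auto simp: \<rho>_def\<close>)
        moreover have A2: "Re ((cnj z + 2*cnj a * (cnj z)^2 - 2*b*z^2) * (F z2 - F z)) \<le> 0"
          unfolding F_def by (rule support) (use h\<rho> zr z0 in \<open>auto simp: \<rho>_def\<close>)
        ultimately show ?thesis using mult_nonneg_nonpos[OF u A1] mult_nonneg_nonpos[OF v A2] by linarith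
      qed
      obtain z where z: "z \<in> cball 0 \<rho>" "\<Psi> z = 0" using acute[OF \<rho>p cont bd] by blast
      have "cmod (\<mu> z - 1) \<le> 1/2"
      proof -
        have nz: "cmod z \<le> \<rho>" using z by simp
        have "\<mu> z - 1 = 2 * cnj (a * z) - 2 * b * z^3 / of_real (\<rho>^2)" by (simp add: \<mu>_def)
        hence "cmod (\<mu> z - 1) \<le> 2 * (cmod a * cmod z) + 2 * (cmod b * cmod z ^ 3 / \<rho>^2)"
          using norm_triangle_ineq4[of "2 * cnj (a * z)" "2 * b * z^3 / of_real (\<rho>^2)"]
          by (simp add: norm_mult norm_divide norm_power)
        also have "\<dots> \<le> 2 * (cmod a * \<rho>) + 2 * (cmod b * \<rho>)"
        proof -
          have "cmod z ^ 3 \<le> \<rho>^3" using nz by (intro power_mono) auto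
          hence "cmod z ^ 3 / \<rho>^2 \<le> \<rho>" using \<rho>p by (simp add: divide_le_eq power2_eq_square power3_eq_cube)
          hence "cmod b * (cmod z ^ 3 / \<rho>^2) \<le> cmod b * \<rho>" by (intro mult_left_mono) auto
          moreover have "cmod a * cmod z \<le> cmod a * \<rho>" using nz by (intro mult_left_mono) auto
          moreover have "cmod b * cmod z ^ 3 / \<rho>^2 = cmod b * (cmod z ^ 3 / \<rho>^2)" by simp
          ultimately show ?thesis by linarith
        qed
        also have "\<dots> \<le> 1/2" using h\<rho> by (simp add: algebra_simps)
        finally show ?thesis .
      qed
      hence "\<mu> z \<noteq> 0" by auto
      hence "F z = w" using z(2) by (simp add: \<Psi>_def)
      moreover have "z \<in> ball 0 r" using z \<rho>r by simp
      ultimately show ?thesis unfolding w_def by (metis image_eqI)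
    qed
  qed
qed

lemma coeff_bound:
  fixes h g :: "complex \<Rightarrow> complex" and \<alpha> \<beta> :: real and \<epsilon> :: complex
  assumes a0: "\<alpha> \<ge> 0" and b0: "0 \<le> \<beta>" and b1: "\<beta> < 1"
    and W: "WH0 \<alpha> \<beta> h g" and e1: "cmod \<epsilon> \<le> 1"
  shows "cmod ((1+\<alpha>) * ((deriv^^2) h 0 + \<epsilon> * (deriv^^2) g 0)) \<le> 2*(1-\<beta>)"
proof -
  define D where "D = ball (0::complex) 1"
  have oD: "open D" and D0: "0 \<in> D" by (auto simp: D_def)
  have hh: "h holomorphic_on D" and hg: "g holomorphic_on D" and h'0: "deriv h 0 = 1" and g'0: "deriv g 0 = 0"
    using W by (auto simp: WH0_def H0_def D_def)
  have ineq: "\<And>z. z \<in> D \<Longrightarrow> Re (deriv h z + of_real \<alpha> * z * (deriv ^^ 2) h z - of_real \<beta>)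
          > cmod (deriv g z + of_real \<alpha> * z * (deriv ^^ 2) g z)"
    using W by (auto simp: WH0_def D_def)
  have fp: "(deriv ^^ 2) f = deriv (deriv f)" for f :: "complex \<Rightarrow> complex" by (simp add: numeral_2_eq_2)
  define h1 where "h1 = deriv h"
  define h2 where "h2 = deriv h1"
  define g1 where "g1 = deriv g"
  define g2 where "g2 = deriv g1"
  have hh1: "h1 holomorphic_on D" and hh2: "h2 holomorphic_on D"
    and hg1: "g1 holomorphic_on D" and hg2: "g2 holomorphic_on D"
    unfolding h1_def h2_def g1_def g2_def using hh hg oD by (auto intro!: holomorphic_deriv)
  define c where "c = 1 - \<beta>"
  have c0: "c > 0" using b1 by (simp add: c_def)
  define Q where "Q z = h1 z + of_real \<alpha> * z * h2 z + \<epsilon> * (g1 z + of_real \<alpha> * z * g2 z) - of_real \<beta>" for z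
  have ReQ: "Re (Q z) > 0" if "z \<in> D" for z
  proof -
    have i: "Re (h1 z + of_real \<alpha> * z * h2 z - of_real \<beta>) > cmod (g1 z + of_real \<alpha> * z * g2 z)"
      using ineq[OF that] by (simp add: fp h1_def h2_def g1_def g2_def)
    have "- Re (\<epsilon> * (g1 z + of_real \<alpha> * z * g2 z)) \<le> cmod (\<epsilon> * (g1 z + of_real \<alpha> * z * g2 z))"
      using abs_Re_le_cmod[of "\<epsilon> * (g1 z + of_real \<alpha> * z * g2 z)"] by linarith
    also have "\<dots> \<le> cmod (g1 z + of_real \<alpha> * z * g2 z)"
      using e1 by (simp add: norm_mult mult_left_le_one_le)
    finally show ?thesis using i by (simp add: Q_def)
  qed
  have Qc: "Q z + of_real c \<noteq> 0" if "z \<in> D" for z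
  proof
    assume "Q z + of_real c = 0"
    hence "Re (Q z) + c = 0" by (metis Re_complex_of_real plus_complex.sel(1) zero_complex.sel(1))
    thus False using ReQ[OF that] c0 by linarith
  qed
  define w where "w z = (Q z - of_real c) / (Q z + of_real c)" for z
  have hQ: "Q holomorphic_on D" unfolding Q_def
    using hh1 hh2 hg1 hg2 by (intro holomorphic_intros) auto
  have hw: "w holomorphic_on ball 0 1" unfolding w_def D_def[symmetric]
    using hQ Qc by (intro holomorphic_intros) auto
  have Q0: "Q 0 = of_real c" by (simp add: Q_def h1_def g1_def h'0 g'0 c_def)
  have w0: "w 0 = 0" by (simp add: w_def Q0)
  have wlt: "cmod (w z) < 1" if "cmod z < 1" for z
  proof -
    have zD: "z \<in> D" using that by (simp add: D_def)
    have "(cmod (Q z - of_real c))^2 < (cmod (Q z + of_real c))^2"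
      using ReQ[OF zD] c0 unfolding cmod_power2 by (simp add: power2_eq_square algebra_simps)
    hence "cmod (Q z - of_real c) < cmod (Q z + of_real c)"
      by (meson norm_ge_zero power_less_imp_less_base)
    thus ?thesis using Qc[OF zD] by (simp add: w_def norm_divide divide_less_eq)
  qed
  have "norm (deriv w 0) \<le> 1"
    using Schwarz_Lemma(2)[OF hw w0 wlt, of 0] by simp
  have d1: "(h1 has_field_derivative h2 0) (at 0)" unfolding h2_def
    using holomorphic_derivI[OF hh1 oD D0] .
  have d2: "(h2 has_field_derivative deriv h2 0) (at 0)"
    using holomorphic_derivI[OF hh2 oD D0] .
  have d3: "(g1 has_field_derivative g2 0) (at 0)" unfolding g2_def
    using holomorphic_derivI[OF hg1 oD D0] .
  have d4: "(g2 has_field_derivative deriv g2 0) (at 0)"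
    using holomorphic_derivI[OF hg2 oD D0] .
  define Q' where "Q' = (1 + of_real \<alpha>) * (h2 0 + \<epsilon> * g2 0)"
  have dQ: "(Q has_field_derivative Q') (at 0)"
  proof -
    have "((\<lambda>z. h1 z + of_real \<alpha> * z * h2 z + \<epsilon> * (g1 z + of_real \<alpha> * z * g2 z) - of_real \<beta>)
       has_field_derivative (h2 0 + (of_real \<alpha> * 1 * h2 0 + deriv h2 0 * (of_real \<alpha> * 0))
          + \<epsilon> * (g2 0 + (of_real \<alpha> * 1 * g2 0 + deriv g2 0 * (of_real \<alpha> * 0))) - 0)) (at 0)"
      by (intro DERIV_diff DERIV_add DERIV_cmult DERIV_mult DERIV_ident DERIV_const d1 d2 d3 d4)
    thus ?thesis unfolding Q_def[abs_def] Q'_def by (simp add: algebra_simps)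
  qed
  have "(w has_field_derivative ((Q' * (Q 0 + of_real c) - (Q 0 - of_real c) * Q') / ((Q 0 + of_real c) * (Q 0 + of_real c)))) (at 0)"
  proof -
    have m: "((\<lambda>x. Q x - of_real c) has_field_derivative Q') (at 0)"
      using DERIV_diff[OF dQ DERIV_const[of "of_real c"]] by simp
    have p: "((\<lambda>x. Q x + of_real c) has_field_derivative Q') (at 0)"
      using DERIV_add[OF dQ DERIV_const[of "of_real c"]] by simp
    show ?thesis unfolding w_def[abs_def] using DERIV_divide[OF m p Qc[OF D0]] by simp
  qed
  hence "deriv w 0 = Q' / (2 * of_real c)"
    using c0 by (simp add: DERIV_imp_deriv Q0 field_simps)
  with \<open>norm (deriv w 0) \<le> 1\<close> have "cmod Q' \<le> 2 * c"
    using c0 by (simp add: norm_divide divide_le_eq)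
  moreover have "cmod ((1+\<alpha>) * ((deriv^^2) h 0 + \<epsilon> * (deriv^^2) g 0)) = cmod Q'"
    by (simp add: Q'_def fp h1_def h2_def g1_def g2_def)
  ultimately show ?thesis by (simp add: c_def)
qed


theorem theorem5p3:
  fixes h g :: "complex \<Rightarrow> complex" and \<alpha> \<beta> :: real
  assumes "\<alpha> \<ge> 0" and "0 \<le> \<beta>" and "\<beta> < 1"
    and "WH0 \<alpha> \<beta> h g"
  shows "convex_map_on
           (\<lambda>z. z + taylor_coeff h 2 * z ^ 2 + cnj (taylor_coeff g 2 * z ^ 2))
           (ball 0 ((1 + \<alpha>) / (4 * (1 - \<beta>))))"
proof -
  define A where "A = (deriv^^2) h 0"
  define B where "B = (deriv^^2) g 0"
  have ta: "taylor_coeff h 2 = A / 2" and tb: "taylor_coeff g 2 = B / 2"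
    by (simp_all add: taylor_coeff_def A_def B_def)
  define \<epsilon> where "\<epsilon> = (if A = 0 then 1 else sgn A) * cnj (sgn B)"
  have e1: "cmod \<epsilon> \<le> 1"
    by (simp add: \<epsilon>_def norm_mult norm_sgn mult_le_one)
  have sB: "cnj (sgn B) * B = of_real (cmod B)"
  proof (cases "B = 0")
    case False
    have "cnj (sgn B) * B = (cnj B * B) / of_real (cmod B)" by (simp add: sgn_div_norm divide_inverse scaleR_conv_of_real)
    also have "cnj B * B = of_real ((cmod B)^2)" by (simp only: complex_norm_square mult.commute)
    finally show ?thesis using False by (simp add: power2_eq_square)
  qed simp
  have sB': "B * cnj (sgn B) = of_real (cmod B)" using sB by (metis mult.commute)
  have "cmod (A + \<epsilon> * B) = cmod A + cmod B"
  proof (cases "A = 0")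
    case True
    thus ?thesis by (simp add: \<epsilon>_def sB)
  next
    case False
    have "A = sgn A * of_real (cmod A)" by (simp add: sgn_div_norm scaleR_conv_of_real False)
    hence "A + \<epsilon> * B = sgn A * of_real (cmod A + cmod B)"
      using False by (simp add: \<epsilon>_def mult.assoc sB sB' algebra_simps)
    thus ?thesis using False by (simp add: norm_mult norm_sgn flip: of_real_add)
  qed
  moreover have "cmod ((1+\<alpha>) * (A + \<epsilon> * B)) \<le> 2*(1-\<beta>)"
    using coeff_bound[OF assms e1] by (simp add: A_def B_def)
  moreover have "cmod (1 + complex_of_real \<alpha>) = 1 + \<alpha>"
  proof -
    have "1 + complex_of_real \<alpha> = of_real (1 + \<alpha>)" by simp
    thus ?thesis using assms(1) by (simp only: norm_of_real)
  qed
  ultimately have bnd: "(1+\<alpha>) * (cmod A + cmod B) \<le> 2*(1-\<beta>)"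
    using assms(1) by (simp add: norm_mult)
  have "(1 + \<alpha>) / (4 * (1 - \<beta>)) * (cmod (taylor_coeff h 2) + cmod (taylor_coeff g 2))
      = ((1+\<alpha>) * (cmod A + cmod B)) / (8 * (1 - \<beta>))"
    by (simp add: ta tb norm_divide field_simps)
  also have "\<dots> \<le> 2*(1-\<beta>) / (8 * (1 - \<beta>))"
    using bnd assms(3) by (intro divide_right_mono) auto
  also have "\<dots> = 1/4" using assms(3) by simp
  finally have hr: "(1 + \<alpha>) / (4 * (1 - \<beta>)) * (cmod (taylor_coeff h 2) + cmod (taylor_coeff g 2)) \<le> 1/4" .
  show ?thesis unfolding convex_map_on_def
    using convex_quad[OF hr] by simp
qed

end
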